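(* Let $d\ge 2$ be an integer, let $C:=-2.15$ and let $g:\mathbb{R}\to\mathbb{R}$ be $$g(z):=\exp\big(z^3+(-2-3C)z^2+(3C^2+4C)z+\ln 2\big)-1 .$$ For $W=[w_1,\ldots,w_d]$ with $w_1,\ldots,w_d\in\mathbb{R}^d$, define $f(\cdot;W):\mathbb{R}^d\to\mathbb{R}^d$ by $f(x;W):=[g(\langle w_1,x\rangle),\ldots,g(\langle w_d,x\rangle)]^\top$. Then there exists such a $W$ for which $f(\cdot;W)$ has two distinct fixed points $p_1,p_2\in\mathbb{R}^d$ such that for each $i\in\{1,2\}$ there exist constants $\epsilon_i>0$, $c_i>0$ and $K_i\in[0,1)$ with the following property: for every initial point $x^{(0)}\in[p_{i,1}-\epsilon_i,p_{i,1}+\epsilon_i]\times\{1\}^{d-1}$, the fixed-point iteration $x^{(t)}=f(x^{(t-1)};W)$ ($t\ge1$) converges to $p_i$, and for every $t\ge2$, $$\|x^{(t)}-p_i\|_\infty\le K_i^t\cdot c_i\epsilon_i .$$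
   Context: $p_{i,1}$ denotes the first coordinate of $p_i$; $\|\cdot\|_\infty$ is the $\ell_\infty$ norm. A fixed point of $F$ is a point $p$ with $F(p)=p$. *)

theory Defs
  imports "HOL-Analysis.Analysis"
begin

text \<open>Vectors in R^d are represented as functions nat => real, indices 0..d-1
  (index 0 = first coordinate), with all entries at indices >= d equal to 0.
  The matrix W = [w_1,...,w_d] is represented by W :: nat => nat => real,
  where W i is the vector w_(i+1), i.e. W i j is its (j+1)-th coordinate.\<close>

definition Cconst :: real where "Cconst = -2.15"

definition g :: "real \<Rightarrow> real" where
  "g z = exp (z^3 + (-2 - 3*Cconst) * z^2 + (3*Cconst^2 + 4*Cconst) * z + ln 2) - 1"

definition rvec :: "nat \<Rightarrow> (nat \<Rightarrow> real) set" where
  "rvec d = {x. \<forall>i\<ge>d. x i = 0}"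

definition inner_d :: "nat \<Rightarrow> (nat \<Rightarrow> real) \<Rightarrow> (nat \<Rightarrow> real) \<Rightarrow> real" where
  "inner_d d u v = (\<Sum>j<d. u j * v j)"

definition fW :: "nat \<Rightarrow> (nat \<Rightarrow> nat \<Rightarrow> real) \<Rightarrow> (nat \<Rightarrow> real) \<Rightarrow> (nat \<Rightarrow> real)" where
  "fW d W x = (\<lambda>i. if i < d then g (inner_d d (W i) x) else 0)"

definition supnorm_d :: "nat \<Rightarrow> (nat \<Rightarrow> real) \<Rightarrow> real" where
  "supnorm_d d x = Max ((\<lambda>i. \<bar>x i\<bar>) ` {..<d})"

end

theory Submission
  imports Defs
begin

definition Qp :: "real \<Rightarrow> real" where
  "Qp z = z^3 + 445/100 * z^2 + 52675/10000 * z"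

lemma g_eq: "g z = exp (Qp z + ln 2) - 1"
  unfolding g_def Qp_def Cconst_def by (simp add: algebra_simps power2_eq_square)

definition aa :: real where "aa = -48/25"
definition bb :: real where "bb = -43/20"
definition hh :: "real \<Rightarrow> real" where "hh s = g (aa * s + bb)"
definition dh :: "real \<Rightarrow> real" where
  "dh s = exp (Qp (aa * s + bb) + ln 2) * (3*(aa * s + bb)^2 + 89/10*(aa * s + bb) + 52675/10000) * aa"

lemma g0: "g 0 = 1" by (simp add: g_eq Qp_def)

lemma hh_deriv: "(hh has_real_derivative dh s) (at s)"
  unfolding hh_def g_eq Qp_def dh_def
  by (auto intro!: derivative_eq_intros simp: algebra_simps power2_eq_square)

lemma hh_cont: "continuous_on S hh"
  unfolding hh_def g_eq Qp_def by (intro continuous_intros)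

lemma lip_from_deriv:
  fixes f f' :: "real \<Rightarrow> real"
  assumes der: "\<And>x. l \<le> x \<Longrightarrow> x \<le> u \<Longrightarrow> (f has_real_derivative f' x) (at x)"
    and bd: "\<And>x. l \<le> x \<Longrightarrow> x \<le> u \<Longrightarrow> \<bar>f' x\<bar> \<le> L"
    and "l \<le> x" "x \<le> u" "l \<le> y" "y \<le> u"
  shows "\<bar>f x - f y\<bar> \<le> L * \<bar>x - y\<bar>"
proof -
  have *: "\<bar>f b - f a\<bar> \<le> L * \<bar>b - a\<bar>" if "l \<le> a" "a < b" "b \<le> u" for a b
  proof -
    have "\<exists>z. a < z \<and> z < b \<and> f b - f a = (b - a) * f' z"
      by (rule MVT2) (use that der in auto)
    then obtain z where z: "a < z" "z < b" "f b - f a = (b - a) * f' z" by blast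
    have "\<bar>f b - f a\<bar> = \<bar>b - a\<bar> * \<bar>f' z\<bar>" using z by (simp add: abs_mult)
    also have "\<dots> \<le> \<bar>b - a\<bar> * L" using bd[of z] z that by (intro mult_left_mono) auto
    finally show ?thesis by (simp add: mult.commute)
  qed
  consider "x < y" | "x = y" | "y < x" by linarith
  then show ?thesis
  proof cases
    case 1 thus ?thesis using *[of x y] assms by (simp add: abs_minus_commute)
  next
    case 2 thus ?thesis by simp
  next
    case 3 thus ?thesis using *[of y x] assms by simp
  qed
qed

lemma contr:
  fixes h :: "real \<Rightarrow> real"
  assumes lip: "\<And>x y. x \<in> {p-e..p+e} \<Longrightarrow> y \<in> {p-e..p+e} \<Longrightarrow> \<bar>h x - h y\<bar> \<le> L * \<bar>x - y\<bar>"
   and hp: "h p = p" and L: "0 \<le> L" "L \<le> 1" and s: "s \<in> {p-e..p+e}"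
  shows "\<bar>(h^^t) s - p\<bar> \<le> L^t * \<bar>s - p\<bar>"
proof (induction t)
  case 0
  then show ?case by simp
next
  case (Suc t)
  have "L^t * \<bar>s - p\<bar> \<le> 1 * \<bar>s - p\<bar>"
    using L by (intro mult_right_mono power_le_one) auto
  also have "\<dots> \<le> e" using s by auto
  finally have "(h^^t) s \<in> {p-e..p+e}" using Suc by auto
  moreover have "p \<in> {p-e..p+e}" using s by auto
  ultimately have "\<bar>h ((h^^t) s) - h p\<bar> \<le> L * \<bar>(h^^t) s - p\<bar>" using lip by blast
  also have "\<dots> \<le> L * (L^t * \<bar>s - p\<bar>)" using Suc L by (intro mult_left_mono) auto
  finally show ?case using hp by simp
qed

lemma fp1: "\<exists>p. -1/20 \<le> p \<and> p \<le> 1/100 \<and> hh p = p"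
proof -
  have "hh (-1/20) = exp (Qp (-1027/500) + ln 2) - 1" by (simp add: hh_def aa_def bb_def g_eq)
  moreover have "exp (Qp (-1027/500) + ln 2) - 1 \<ge> Qp (-1027/500) + ln 2"
    using exp_ge_add_one_self[of "Qp (-1027/500) + ln 2"] by linarith
  moreover have "Qp (-1027/500) + ln 2 \<ge> -1/20" using ln2_ge_two_thirds by (simp add: Qp_def power2_eq_square power3_eq_cube)
  ultimately have a: "-1/20 - hh (-1/20) \<le> 0" by linarith
  have "hh (1/100) = exp (Qp (-5423/2500) + ln 2) - 1" by (simp add: hh_def aa_def bb_def g_eq)
  moreover have "Qp (-5423/2500) + ln 2 \<le> 1/1000" using ln2_le_25_over_36 by (simp add: Qp_def power2_eq_square power3_eq_cube)
  hence "exp (Qp (-5423/2500) + ln 2) \<le> exp (1/1000)" by simp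
  moreover have "exp (1/1000::real) \<le> 1 + 2 * (1/1000)" by (rule real_exp_bound_lemma) auto
  ultimately have b: "0 \<le> 1/100 - hh (1/100)" by linarith
  have "\<exists>x. -1/20 \<le> x \<and> x \<le> 1/100 \<and> (\<lambda>s. s - hh s) x = 0"
    by (rule IVT') (use a b in \<open>auto intro!: continuous_intros hh_cont\<close>)
  thus ?thesis by auto
qed

lemma fp2: "\<exists>p. -3/4 \<le> p \<and> p \<le> -13/20 \<and> hh p = p"
proof -
  have "hh (-3/4) = exp (Qp (-71/100) + ln 2) - 1" by (simp add: hh_def aa_def bb_def g_eq)
  moreover have "Qp (-71/100) + ln 2 \<ge> -6/5" using ln2_ge_two_thirds by (simp add: Qp_def power2_eq_square power3_eq_cube)
  hence "exp (Qp (-71/100) + ln 2) \<ge> exp (-6/5)" by simp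
  moreover have "(1 + (-6/5) / real 8) ^ 8 \<le> exp (-6/5::real)"
    by (rule exp_ge_one_plus_x_over_n_power_n) auto
  moreover have "(1 + (-6/5) / real 8) ^ 8 \<ge> (1/4::real)" by (simp add: power_divide)
  ultimately have a: "-3/4 - hh (-3/4) \<le> 0" by linarith
  have "hh (-13/20) = exp (Qp (-451/500) + ln 2) - 1" by (simp add: hh_def aa_def bb_def g_eq)
  moreover have "Qp (-451/500) + ln 2 \<le> -117/100" using ln2_le_25_over_36 by (simp add: Qp_def power2_eq_square power3_eq_cube)
  hence "exp (Qp (-451/500) + ln 2) \<le> exp (-117/100)" by simp
  moreover have "(1 + (117/100) / real 8) ^ 8 \<le> exp (117/100::real)"
    by (rule exp_ge_one_plus_x_over_n_power_n) auto
  moreover have "(1 + (117/100) / real 8) ^ 8 \<ge> (29/10::real)" by (simp add: power_divide)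
  ultimately have E: "29/10 \<le> exp (117/100::real)" by linarith
  have "exp (-117/100::real) = inverse (exp (117/100))" by (simp add: exp_minus)
  also have "\<dots> \<le> inverse (29/10)" by (rule le_imp_inverse_le) (use E in auto)
  finally have X: "exp (-117/100::real) \<le> 10/29" by simp
  have "exp (Qp (-451/500) + ln 2) \<le> 10/29"
    using X \<open>exp (Qp (-451/500) + ln 2) \<le> exp (-117/100)\<close> by linarith
  with \<open>hh (-13/20) = _\<close> have b: "0 \<le> -13/20 - hh (-13/20)" by linarith
  have "\<exists>x. -3/4 \<le> x \<and> x \<le> -13/20 \<and> (\<lambda>s. s - hh s) x = 0"
    by (rule IVT') (use a b in \<open>auto intro!: continuous_intros hh_cont\<close>)
  thus ?thesis by auto
qed

lemma dh_form: "dh s = exp (Qp (aa * s + bb) + ln 2) * (3 * (((aa * s + bb) + 43/20) * ((aa * s + bb) + 49/60))) * (-48/25)"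
proof -
  have e: "3*(aa * s + bb)^2 + 89/10*(aa * s + bb) + 52675/10000 = 3*(((aa * s + bb)+43/20)*((aa * s + bb)+49/60))"
    by algebra
  show ?thesis unfolding dh_def e by (simp add: aa_def)
qed

lemma dh_bound1:
  assumes "-11/200 \<le> s" "s \<le> 3/200" shows "\<bar>dh s\<bar> \<le> 9/10"
proof -
  define z where "z = aa * s + bb"
  have z: "z = -48/25 * s - 43/20" by (simp add: z_def aa_def bb_def)
  have dh: "dh s = exp (Qp z + ln 2) * (3 * ((z + 43/20) * (z + 49/60))) * (-48/25)"
    using dh_form[of s] by (simp add: z_def)
  have Qid: "Qp z = -5547/8000 + (z+43/20)^2*(z+3/20)"
    unfolding Qp_def by algebra
  have "(z+43/20)^2*(z+3/20) \<le> 0" using z assms by (intro mult_nonneg_nonpos) auto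
  hence "Qp z + ln 2 \<le> 1/200" using Qid ln2_le_25_over_36 by linarith
  hence "exp (Qp z + ln 2) \<le> exp (1/200)" by simp
  also have "\<dots> \<le> 1 + 2*(1/200)" by (rule real_exp_bound_lemma) auto
  finally have e: "exp (Qp z + ln 2) \<le> 101/100" by simp
  have A: "\<bar>z+43/20\<bar> \<le> 66/625" using z assms unfolding abs_le_iff by linarith
  have B: "\<bar>z+49/60\<bar> \<le> 137/100" using z assms unfolding abs_le_iff by linarith
  have P: "\<bar>z+43/20\<bar> * \<bar>z+49/60\<bar> \<le> 66/625 * (137/100)"
    by (intro mult_mono A B) auto
  have "exp (Qp z + ln 2) * (3 * (\<bar>z+43/20\<bar> * \<bar>z+49/60\<bar>)) \<le> 101/100 * (3 * (66/625 * (137/100)))"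
    by (rule mult_mono) (use e P in auto)
  moreover have "\<bar>dh s\<bar> = exp (Qp z + ln 2) * (3 * (\<bar>z+43/20\<bar> * \<bar>z+49/60\<bar>)) * (48/25)"
    by (simp add: dh abs_mult)
  ultimately show ?thesis by linarith
qed

lemma dh_bound2:
  assumes "-19/25 \<le> s" "s \<le> -16/25" shows "\<bar>dh s\<bar> \<le> 3/5"
proof -
  define z where "z = aa * s + bb"
  have z: "z = -48/25 * s - 43/20" by (simp add: z_def aa_def bb_def)
  have dh: "dh s = exp (Qp z + ln 2) * (3 * ((z + 43/20) * (z + 49/60))) * (-48/25)"
    using dh_form[of s] by (simp add: z_def)
  have Qid: "Qp z = -405769/216000 + (z+49/60)^2*(z+169/60)"
    unfolding Qp_def by algebra
  have A: "\<bar>z+43/20\<bar> \<le> 146/100" using z assms unfolding abs_le_iff by linarith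
  have B: "\<bar>z+49/60\<bar> \<le> 126/1000" using z assms unfolding abs_le_iff by linarith
  have B2: "(z+49/60)^2 \<le> (126/1000)^2"
    using power_mono[OF B, of 2] by simp
  have C: "0 \<le> z+169/60" "z+169/60 \<le> 213/100" using z assms by auto
  have "(z+49/60)^2*(z+169/60) \<le> (126/1000)^2 * (213/100)"
    by (rule mult_mono) (use B2 C in auto)
  hence "Qp z \<le> -25/18" using Qid by (simp add: power2_eq_square)
  hence "Qp z + ln 2 \<le> - ln 2" using ln2_le_25_over_36 by linarith
  hence "exp (Qp z + ln 2) \<le> exp (- ln 2)" by simp
  also have "\<dots> = 1/2" by (simp add: exp_minus)
  finally have e: "exp (Qp z + ln 2) \<le> 1/2" .
  have P: "\<bar>z+43/20\<bar> * \<bar>z+49/60\<bar> \<le> 146/100 * (126/1000)"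
    by (intro mult_mono A B) auto
  have "exp (Qp z + ln 2) * (3 * (\<bar>z+43/20\<bar> * \<bar>z+49/60\<bar>)) \<le> 1/2 * (3 * (146/100 * (126/1000)))"
    by (rule mult_mono) (use e P in auto)
  moreover have "\<bar>dh s\<bar> = exp (Qp z + ln 2) * (3 * (\<bar>z+43/20\<bar> * \<bar>z+49/60\<bar>)) * (48/25)"
    by (simp add: dh abs_mult)
  ultimately show ?thesis by linarith
qed

definition WW :: "nat \<Rightarrow> nat \<Rightarrow> real" where
  "WW i j = (if i = 0 \<and> j = 0 then aa else if i = 0 \<and> j = 1 then bb else 0)"
definition vv :: "nat \<Rightarrow> real \<Rightarrow> nat \<Rightarrow> real" where
  "vv d s i = (if i = 0 then s else if i < d then 1 else 0)"

lemma inner0: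
  assumes "2 \<le> d" shows "inner_d d (WW 0) (vv d s) = aa * s + bb"
proof -
  have "inner_d d (WW 0) (vv d s) = (\<Sum>j\<in>{0,1}. WW 0 j * vv d s j)"
    unfolding inner_d_def by (rule sum.mono_neutral_right) (use assms in \<open>auto simp: WW_def\<close>)
  then show ?thesis using assms by (simp add: WW_def vv_def)
qed

lemma fW_vv:
  assumes "2 \<le> d" shows "fW d WW (vv d s) = vv d (hh s)"
proof (rule ext)
  fix i
  show "fW d WW (vv d s) i = vv d (hh s) i"
  proof (cases "i = 0")
    case True
    then show ?thesis using assms inner0[OF assms, of s] by (simp add: fW_def vv_def hh_def)
  next
    case False
    then have "WW i = (\<lambda>j. 0)" by (simp add: WW_def fun_eq_iff)
    then have "inner_d d (WW i) (vv d s) = 0" by (simp add: inner_d_def)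
    then show ?thesis using False by (simp add: fW_def vv_def g0)
  qed
qed

lemma iter_vv:
  assumes "2 \<le> d" shows "(fW d WW ^^ t) (vv d s) = vv d ((hh^^t) s)"
  by (induction t) (simp_all add: fW_vv[OF assms])

lemma sup_vv:
  assumes "1 \<le> d" shows "supnorm_d d (vv d u - vv d p) = \<bar>u - p\<bar>"
  unfolding supnorm_d_def
proof (rule Max_eqI)
  show "finite ((\<lambda>i. \<bar>(vv d u - vv d p) i\<bar>) ` {..<d})" by simp
  show "\<And>y. y \<in> (\<lambda>i. \<bar>(vv d u - vv d p) i\<bar>) ` {..<d} \<Longrightarrow> y \<le> \<bar>u - p\<bar>"
    by (auto simp: vv_def)
  show "\<bar>u - p\<bar> \<in> (\<lambda>i. \<bar>(vv d u - vv d p) i\<bar>) ` {..<d}"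
    by (rule image_eqI[of _ _ 0]) (use assms in \<open>auto simp: vv_def\<close>)
qed

lemma conv_part:
  assumes d: "2 \<le> d" and hq: "hh q = q" and e: "0 < e" and L: "0 \<le> L" "L < 1"
    and lip: "\<And>x y. x \<in> {q-e..q+e} \<Longrightarrow> y \<in> {q-e..q+e} \<Longrightarrow> \<bar>hh x - hh y\<bar> \<le> L * \<bar>x - y\<bar>"
  shows "\<exists>\<epsilon> c K. \<epsilon> > 0 \<and> c > 0 \<and> 0 \<le> K \<and> K < 1 \<and>
                 (\<forall>x0 \<in> rvec d. x0 0 \<in> {vv d q 0 - \<epsilon> .. vv d q 0 + \<epsilon>} \<and> (\<forall>j. 1 \<le> j \<and> j < d \<longrightarrow> x0 j = 1) \<longrightarrow>
                    ((\<lambda>t. supnorm_d d ((fW d WW ^^ t) x0 - vv d q)) \<longlonglongrightarrow> 0) \<and>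
                    (\<forall>t\<ge>2. supnorm_d d ((fW d WW ^^ t) x0 - vv d q) \<le> K ^ t * c * \<epsilon>))"
proof -
  have "\<forall>x0 \<in> rvec d. x0 0 \<in> {vv d q 0 - e .. vv d q 0 + e} \<and> (\<forall>j. 1 \<le> j \<and> j < d \<longrightarrow> x0 j = 1) \<longrightarrow>
                    ((\<lambda>t. supnorm_d d ((fW d WW ^^ t) x0 - vv d q)) \<longlonglongrightarrow> 0) \<and>
                    (\<forall>t\<ge>2. supnorm_d d ((fW d WW ^^ t) x0 - vv d q) \<le> L ^ t * 1 * e)"
  proof (intro ballI impI conjI allI)
  fix x0 assume x0r: "x0 \<in> rvec d"
    and H: "x0 0 \<in> {vv d q 0 - e .. vv d q 0 + e} \<and> (\<forall>j. 1 \<le> j \<and> j < d \<longrightarrow> x0 j = 1)"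
  have x0: "x0 = vv d (x0 0)"
  proof (rule ext)
    fix i show "x0 i = vv d (x0 0) i"
      using x0r H by (cases "i = 0") (auto simp: vv_def rvec_def)
  qed
  have s: "x0 0 \<in> {q-e..q+e}" using H by (simp add: vv_def)
  have bnd: "supnorm_d d ((fW d WW ^^ t) x0 - vv d q) \<le> L^t * e" for t
  proof -
    have "supnorm_d d ((fW d WW ^^ t) x0 - vv d q) = \<bar>(hh^^t) (x0 0) - q\<bar>"
      using d by (subst x0) (simp add: iter_vv sup_vv)
    also have "\<dots> \<le> L^t * \<bar>x0 0 - q\<bar>"
      by (rule contr[OF lip hq L(1) _ s]) (use L in auto)
    also have "\<dots> \<le> L^t * e" using s L by (intro mult_left_mono) auto
    finally show ?thesis .
  qed
  have nn: "0 \<le> supnorm_d d ((fW d WW ^^ t) x0 - vv d q)" for t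
    using d by (subst x0) (simp add: iter_vv sup_vv)
  have "(\<lambda>t. L^t * e) \<longlonglongrightarrow> 0"
    by (intro tendsto_mult_left_zero LIMSEQ_power_zero) (use L in auto)
  then show "(\<lambda>t. supnorm_d d ((fW d WW ^^ t) x0 - vv d q)) \<longlonglongrightarrow> 0"
    by (rule tendsto_sandwich[rotated 2, OF tendsto_const]) (use bnd nn in auto)
  fix t :: nat
  show "supnorm_d d ((fW d WW ^^ t) x0 - vv d q) \<le> L ^ t * 1 * e" using bnd by simp
  qed
  then show ?thesis using e L by (intro exI[of _ e] exI[of _ "1::real"] exI[of _ L]) auto
qed

theorem lemmaC7:
  fixes d :: nat
  assumes "d \<ge> 2"
  shows "\<exists>W :: nat \<Rightarrow> nat \<Rightarrow> real.
           (\<forall>i. W i \<in> rvec d) \<and>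
           (\<exists>p1 p2. p1 \<in> rvec d \<and> p2 \<in> rvec d \<and> p1 \<noteq> p2 \<and>
              fW d W p1 = p1 \<and> fW d W p2 = p2 \<and>
              (\<forall>p \<in> {p1, p2}. \<exists>\<epsilon> c K. \<epsilon> > 0 \<and> c > 0 \<and> 0 \<le> K \<and> K < 1 \<and>
                 (\<forall>x0 \<in> rvec d. x0 0 \<in> {p 0 - \<epsilon> .. p 0 + \<epsilon>} \<and> (\<forall>j. 1 \<le> j \<and> j < d \<longrightarrow> x0 j = 1) \<longrightarrow>
                    ((\<lambda>t. supnorm_d d ((fW d W ^^ t) x0 - p)) \<longlonglongrightarrow> 0) \<and>
                    (\<forall>t\<ge>2. supnorm_d d ((fW d W ^^ t) x0 - p) \<le> K ^ t * c * \<epsilon>))))"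
proof -
  obtain p1 where p1: "-1/20 \<le> p1" "p1 \<le> 1/100" "hh p1 = p1" using fp1 by blast
  obtain p2 where p2: "-3/4 \<le> p2" "p2 \<le> -13/20" "hh p2 = p2" using fp2 by blast
  have lip1: "\<bar>hh x - hh y\<bar> \<le> 9/10 * \<bar>x - y\<bar>"
    if "x \<in> {p1 - 1/200..p1 + 1/200}" "y \<in> {p1 - 1/200..p1 + 1/200}" for x y
    by (rule lip_from_deriv[where l="-11/200" and u="3/200" and f'=dh])
       (use hh_deriv dh_bound1 p1 that in auto)
  have lip2: "\<bar>hh x - hh y\<bar> \<le> 3/5 * \<bar>x - y\<bar>"
    if "x \<in> {p2 - 1/100..p2 + 1/100}" "y \<in> {p2 - 1/100..p2 + 1/100}" for x y
    by (rule lip_from_deriv[where l="-19/25" and u="-16/25" and f'=dh])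
       (use hh_deriv dh_bound2 p2 that in auto)
  have e1: "0 < (1/200::real)" "0 \<le> (9/10::real)" "(9/10::real) < 1" by auto
  have e2: "0 < (1/100::real)" "0 \<le> (3/5::real)" "(3/5::real) < 1" by auto
  note C1 = conv_part[OF assms p1(3) e1 lip1]
  note C2 = conv_part[OF assms p2(3) e2 lip2]
  have W: "\<forall>i. WW i \<in> rvec d" using assms by (auto simp: rvec_def WW_def)
  have V: "vv d p \<in> rvec d" for p using assms by (auto simp: rvec_def vv_def)
  have "vv d p1 0 \<noteq> vv d p2 0" using p1 p2 by (simp add: vv_def)
  then have ne: "vv d p1 \<noteq> vv d p2" by metis
  have F1: "fW d WW (vv d p1) = vv d p1" using fW_vv[OF assms, of p1] p1 by simp
  have F2: "fW d WW (vv d p2) = vv d p2" using fW_vv[OF assms, of p2] p2 by simp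
  have B: "\<forall>p \<in> {vv d p1, vv d p2}. \<exists>\<epsilon> c K. \<epsilon> > 0 \<and> c > 0 \<and> 0 \<le> K \<and> K < 1 \<and>
                 (\<forall>x0 \<in> rvec d. x0 0 \<in> {p 0 - \<epsilon> .. p 0 + \<epsilon>} \<and> (\<forall>j. 1 \<le> j \<and> j < d \<longrightarrow> x0 j = 1) \<longrightarrow>
                    ((\<lambda>t. supnorm_d d ((fW d WW ^^ t) x0 - p)) \<longlonglongrightarrow> 0) \<and>
                    (\<forall>t\<ge>2. supnorm_d d ((fW d WW ^^ t) x0 - p) \<le> K ^ t * c * \<epsilon>))"
    using C1 C2 by blast
  show ?thesis
    by (rule exI[of _ WW], intro conjI W exI[of _ "vv d p1"] exI[of _ "vv d p2"]) (use V ne F1 F2 B in blast)+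
qed

end
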